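(* Let $R$ be a field, $S$ an idempotent semifield and $v:R\to S$ a B\'ezout valuation. Then $v$ is surjective if and only if its restriction $v^\circ:R^\circ\to S^\circ$ is surjective.
   Context: An idempotent semiring is commutative with $a+a=a$, ordered by $a\le b$ iff $a+b=b$; a semifield has nonzero elements invertible. A valuation $v:R\to S$ satisfies $v(0)=0$, $v(1)=v(-1)=1$, $v(ab)=v(a)v(b)$, $v(a+b)\le v(a)+v(b)$, $v(a)\ne0$ for $a\ne0$. $R^\circ=\{a\in R:v(a)\le1\}$, $S^\circ=\{x\in S:x\le1\}$. $v$ is B\'ezout if for all $a,b\in R$ there are $x,y\in R^\circ$ with $v(xa+yb)=v(a)+v(b)$. *)

theory Defs
  imports Main
begin

definition idem_semifield :: "'b::comm_semiring_1 itself \<Rightarrow> bool" where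
  "idem_semifield _ \<longleftrightarrow> (\<forall>a::'b. a + a = a) \<and> (\<forall>x::'b. x \<noteq> 0 \<longrightarrow> (\<exists>y. x * y = 1))"

text \<open>The natural order of an idempotent semiring: a \<le> b iff a + b = b.\<close>
definition sle :: "'b::comm_semiring_1 \<Rightarrow> 'b \<Rightarrow> bool" where
  "sle a b \<longleftrightarrow> a + b = b"

definition valuation :: "('a::field \<Rightarrow> 'b::comm_semiring_1) \<Rightarrow> bool" where
  "valuation v \<longleftrightarrow> v 0 = 0 \<and> v 1 = 1 \<and> v (-1) = 1
     \<and> (\<forall>a b. v (a * b) = v a * v b)
     \<and> (\<forall>a b. sle (v (a + b)) (v a + v b))
     \<and> (\<forall>a. a \<noteq> 0 \<longrightarrow> v a \<noteq> 0)"

definition val_ring :: "('a::field \<Rightarrow> 'b::comm_semiring_1) \<Rightarrow> 'a set" where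
  "val_ring v = {a. sle (v a) 1}"

definition unit_part :: "'b::comm_semiring_1 set" where
  "unit_part = {x. sle x 1}"

definition bezout :: "('a::field \<Rightarrow> 'b::comm_semiring_1) \<Rightarrow> bool" where
  "bezout v \<longleftrightarrow> (\<forall>a b. \<exists>x\<in>val_ring v. \<exists>y\<in>val_ring v. v (x * a + y * b) = v a + v b)"

end

theory Submission
  imports Defs
begin

theorem corollary2p16:
  fixes v :: "'a::field \<Rightarrow> 'b::comm_semiring_1"
  assumes "idem_semifield TYPE('b)"
    and "valuation v"
    and "bezout v"
  shows "surj v \<longleftrightarrow> v ` val_ring v = unit_part"
proof -
  have idem: "\<And>a::'b. a + a = a" and inv: "\<And>x::'b. x \<noteq> 0 \<Longrightarrow> \<exists>y. x * y = 1"
    using assms(1) unfolding idem_semifield_def by auto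
  have v0: "v 0 = 0" and v1: "v 1 = 1" and vm: "\<And>a b. v (a * b) = v a * v b"
    using assms(2) unfolding valuation_def by auto
  have sub: "v ` val_ring v \<subseteq> unit_part"
    unfolding val_ring_def unit_part_def by auto
  show ?thesis
  proof
    assume "surj v"
    have "unit_part \<subseteq> v ` val_ring v"
    proof
      fix x :: 'b assume x: "x \<in> unit_part"
      from \<open>surj v\<close> obtain a where "x = v a" by (metis surjD)
      then show "x \<in> v ` val_ring v" using x unfolding val_ring_def unit_part_def by auto
    qed
    then show "v ` val_ring v = unit_part" using sub by auto
  next
    assume eq: "v ` val_ring v = unit_part"
    show "surj v" unfolding surj_def
    proof
      fix s :: 'b
      show "\<exists>a. s = v a"
      proof (cases "s = 0")
        case True then show ?thesis using v0 by metis
      next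
        case False
        have one1: "(1::'b) + 1 = 1" by (rule idem)
        have k: "1 + (s + 1) = s + 1"
        proof -
          have "1 + (s + 1) = s + (1 + 1)" by (rule add.left_commute)
          also have "\<dots> = s + 1" by (simp only: one1)
          finally show ?thesis .
        qed
        have ne: "s + 1 \<noteq> 0"
        proof
          assume h: "s + 1 = 0"
          have "(1::'b) = 1 + (s + 1)" using h by simp
          also have "\<dots> = 0" using k h by simp
          finally show False by simp
        qed
        then obtain u where u: "(s + 1) * u = 1" using inv by blast
        have u': "u * (s + 1) = 1" using u by (simp add: mult.commute)
        have "u + 1 = (u + 1) * ((s + 1) * u)" using u by simp
        also have "\<dots> = ((u + 1) * (s + 1)) * u" by (simp only: mult.assoc)
        also have "(u + 1) * (s + 1) = u * (s + 1) + (s + 1)" by (simp only: distrib_right mult_1_left)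
        also have "u * (s + 1) + (s + 1) = s + 1" using u' k by simp
        finally have u1: "u + 1 = 1" using u by simp
        have kk: "s + (s + 1) = s + 1" by (simp only: add.assoc[symmetric] idem)
        have "s * u + 1 = s * u + u * (s + 1)" using u' by simp
        also have "\<dots> = u * (s + (s + 1))" by (simp only: distrib_left mult.commute)
        also have "\<dots> = 1" using u' kk by simp
        finally have su1: "s * u + 1 = 1" .
        have "u \<in> unit_part" "s * u \<in> unit_part"
          using u1 su1 unfolding unit_part_def sle_def by auto
        then obtain a b where a: "v a = u" and b: "v b = s * u"
          using eq by (metis imageE)
        have "a \<noteq> 0" using a u v0 by auto
        then have "v (inverse a) * u = 1" using a vm v1 by (metis field_class.field_inverse mult.commute)
        then have vi: "v (inverse a) = s + 1" using u
          by (metis mult.assoc mult.commute mult_1_right)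
        have "v (b * inverse a) = s * ((s + 1) * u)" using vm b vi by (simp add: ac_simps)
        then show ?thesis using u by auto
      qed
    qed
  qed
qed

end
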